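(* Let $(V,[\cdot,\cdot,\cdot],[\cdot,\cdot])$ be a Bol algebra over a field of characteristic $0$ and $U(V)$ its universal enveloping algebra. If $a,b\in V$ satisfy $[a,b]=0$, then the commutator $[L_a,L_b]=L_aL_b-L_bL_a$ of left multiplication operators on $U(V)$ is a derivation of $U(V)$.
   Context: A (left) Bol algebra is a vector space $V$ with a skew-symmetric bilinear bracket $[\cdot,\cdot]$ and a trilinear bracket $[\cdot,\cdot,\cdot]$ satisfying $[a,a,b]=0$, $[a,b,c]+[b,c,a]+[c,a,b]=0$, $[x,y,[a,b,c]]=[[x,y,a],b,c]+[a,[x,y,b],c]+[a,b,[x,y,c]]$, and $[a,b,[x,y]]=[[a,b,x],y]+[x,[a,b,y]]+[x,y,[a,b]]+[[a,b],[x,y]]$. Its universal enveloping algebra $U(V)$ (in the sense of Pérez-Izquierdo) is a unital non-associative bialgebra (comultiplication $\Delta(x)=\sum x_{(1)}\otimes x_{(2)}$, counit $\epsilon$) generated as a unital algebra by $V\subseteq U(V)$, $V$ being its space of primitive elements, satisfying $\sum a_{(1)}(y(a_{(2)}z))=\sum (a_{(1)}(ya_{(2)}))z$ for all $a,y,z\in U(V)$; in particular $(a,y,z)=-(y,a,z)$ for $a\in V$, $y,z\in U(V)$, where $(x,y,z)=(xy)z-x(yz)$, and for $a,b,c\in V$: $[a,b]=ab-ba$, $[a,b,c]=a(bc)-b(ac)-c(ab)+c(ba)$. $L_x$ denotes left multiplication by $x$. *)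

theory Defs
  imports Complex_Main
begin

text \<open>Setting: a field 'k of characteristic 0, a vector space 'u over 'k with scalar
multiplication smult (HOL locale vector_space). The whole type 'u plays the role of U(V),
V is a subset of it.\<close>

definition bilinear_map :: "('k::field \<Rightarrow> 'u::ab_group_add \<Rightarrow> 'u) \<Rightarrow> ('u \<Rightarrow> 'u \<Rightarrow> 'w::ab_group_add) \<Rightarrow> ('k \<Rightarrow> 'w \<Rightarrow> 'w) \<Rightarrow> bool" where
  "bilinear_map smult f smultw \<longleftrightarrow>
     (\<forall>x y z. f (x + y) z = f x z + f y z) \<and>
     (\<forall>x y z. f x (y + z) = f x y + f x z) \<and>
     (\<forall>c x y. f (smult c x) y = smultw c (f x y)) \<and>
     (\<forall>c x y. f x (smult c y) = smultw c (f x y))"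

definition trilinear_map :: "('k::field \<Rightarrow> 'u::ab_group_add \<Rightarrow> 'u) \<Rightarrow> ('u \<Rightarrow> 'u \<Rightarrow> 'u \<Rightarrow> 'u) \<Rightarrow> bool" where
  "trilinear_map smult g \<longleftrightarrow>
     (\<forall>x y z w. g (x + w) y z = g x y z + g w y z) \<and>
     (\<forall>x y z w. g x (y + w) z = g x y z + g x w z) \<and>
     (\<forall>x y z w. g x y (z + w) = g x y z + g x y w) \<and>
     (\<forall>c x y z. g (smult c x) y z = smult c (g x y z)) \<and>
     (\<forall>c x y z. g x (smult c y) z = smult c (g x y z)) \<and>
     (\<forall>c x y z. g x y (smult c z) = smult c (g x y z))"

text \<open>Elements of U \<otimes> U are represented by finite lists of pairs (sums of simple tensors).\<close>

definition tensor_sum :: "('u \<Rightarrow> 'u \<Rightarrow> 'w::comm_monoid_add) \<Rightarrow> ('u \<times> 'u) list \<Rightarrow> 'w" where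
  "tensor_sum f xs = sum_list (map (\<lambda>(p, q). f p q) xs)"

text \<open>Equality in U \<otimes> U: two representatives are equal iff every bilinear map U \<times> U \<rightarrow> U
agrees on them (universal property of the tensor product; U-valued maps suffice since U \<noteq> 0).\<close>

definition tensor_eq :: "('k::field \<Rightarrow> 'u::ab_group_add \<Rightarrow> 'u) \<Rightarrow> ('u \<times> 'u) list \<Rightarrow> ('u \<times> 'u) list \<Rightarrow> bool" where
  "tensor_eq smult xs ys \<longleftrightarrow>
     (\<forall>f. bilinear_map smult f smult \<longrightarrow> tensor_sum f xs = tensor_sum f ys)"

text \<open>Left Bol algebra on a subspace V (brackets need only be meaningful on V).\<close>

definition bol_algebra :: "('k::field \<Rightarrow> 'u::ab_group_add \<Rightarrow> 'u) \<Rightarrow> 'u set \<Rightarrow>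
    ('u \<Rightarrow> 'u \<Rightarrow> 'u) \<Rightarrow> ('u \<Rightarrow> 'u \<Rightarrow> 'u \<Rightarrow> 'u) \<Rightarrow> bool" where
  "bol_algebra smult V br br3 \<longleftrightarrow>
     vector_space smult \<and> module.subspace smult V \<and>
     (\<forall>a\<in>V. \<forall>b\<in>V. br a b \<in> V) \<and>
     (\<forall>a\<in>V. \<forall>b\<in>V. \<forall>c\<in>V. br3 a b c \<in> V) \<and>
     \<comment> \<open>bilinearity of the binary bracket on V\<close>
     (\<forall>a\<in>V. \<forall>b\<in>V. \<forall>c\<in>V. br (a + b) c = br a c + br b c) \<and>
     (\<forall>k. \<forall>a\<in>V. \<forall>b\<in>V. br (smult k a) b = smult k (br a b)) \<and>
     \<comment> \<open>skew-symmetry\<close>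
     (\<forall>a\<in>V. \<forall>b\<in>V. br a b = - br b a) \<and>
     \<comment> \<open>trilinearity of the ternary bracket on V\<close>
     (\<forall>a\<in>V. \<forall>a'\<in>V. \<forall>b\<in>V. \<forall>c\<in>V. br3 (a + a') b c = br3 a b c + br3 a' b c) \<and>
     (\<forall>a\<in>V. \<forall>b\<in>V. \<forall>b'\<in>V. \<forall>c\<in>V. br3 a (b + b') c = br3 a b c + br3 a b' c) \<and>
     (\<forall>a\<in>V. \<forall>b\<in>V. \<forall>c\<in>V. \<forall>c'\<in>V. br3 a b (c + c') = br3 a b c + br3 a b c') \<and>
     (\<forall>k. \<forall>a\<in>V. \<forall>b\<in>V. \<forall>c\<in>V. br3 (smult k a) b c = smult k (br3 a b c)) \<and>
     (\<forall>k. \<forall>a\<in>V. \<forall>b\<in>V. \<forall>c\<in>V. br3 a (smult k b) c = smult k (br3 a b c)) \<and>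
     (\<forall>k. \<forall>a\<in>V. \<forall>b\<in>V. \<forall>c\<in>V. br3 a b (smult k c) = smult k (br3 a b c)) \<and>
     \<comment> \<open>Bol algebra axioms\<close>
     (\<forall>a\<in>V. \<forall>b\<in>V. br3 a a b = 0) \<and>
     (\<forall>a\<in>V. \<forall>b\<in>V. \<forall>c\<in>V. br3 a b c + br3 b c a + br3 c a b = 0) \<and>
     (\<forall>x\<in>V. \<forall>y\<in>V. \<forall>a\<in>V. \<forall>b\<in>V. \<forall>c\<in>V.
        br3 x y (br3 a b c) = br3 (br3 x y a) b c + br3 a (br3 x y b) c + br3 a b (br3 x y c)) \<and>
     (\<forall>a\<in>V. \<forall>b\<in>V. \<forall>x\<in>V. \<forall>y\<in>V.
        br3 a b (br x y) = br (br3 a b x) y + br x (br3 a b y) + br3 x y (br a b) + br (br a b) (br x y))"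

definition bol_enveloping ::
  "('k::field \<Rightarrow> 'u::ab_group_add \<Rightarrow> 'u) \<Rightarrow> 'u set \<Rightarrow>
   ('u \<Rightarrow> 'u \<Rightarrow> 'u) \<Rightarrow> ('u \<Rightarrow> 'u \<Rightarrow> 'u \<Rightarrow> 'u) \<Rightarrow>
   ('u \<Rightarrow> 'u \<Rightarrow> 'u) \<Rightarrow> 'u \<Rightarrow> ('u \<Rightarrow> ('u \<times> 'u) list) \<Rightarrow> ('u \<Rightarrow> 'k) \<Rightarrow> bool" where
  "bol_enveloping smult V br br3 mul e Delta eps \<longleftrightarrow>
     bol_algebra smult V br br3 \<and>
     \<comment> \<open>unital (non-associative) algebra\<close>
     bilinear_map smult mul smult \<and>
     (\<forall>x. mul e x = x \<and> mul x e = x) \<and>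
     \<comment> \<open>Delta, eps linear\<close>
     (\<forall>x y. tensor_eq smult (Delta (x + y)) (Delta x @ Delta y)) \<and>
     (\<forall>c x. tensor_eq smult (Delta (smult c x)) (map (\<lambda>(p, q). (smult c p, q)) (Delta x))) \<and>
     (\<forall>x y. eps (x + y) = eps x + eps y) \<and>
     (\<forall>c x. eps (smult c x) = c * eps x) \<and>
     \<comment> \<open>coassociativity (equality in U \<otimes> U \<otimes> U tested by trilinear maps)\<close>
     (\<forall>x g. trilinear_map smult g \<longrightarrow>
        sum_list (map (\<lambda>(p, q). sum_list (map (\<lambda>(r, s). g r s q) (Delta p))) (Delta x)) =
        sum_list (map (\<lambda>(p, q). sum_list (map (\<lambda>(r, s). g p r s) (Delta q))) (Delta x))) \<and>
     \<comment> \<open>counit\<close>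
     (\<forall>x. sum_list (map (\<lambda>(p, q). smult (eps p) q) (Delta x)) = x \<and>
          sum_list (map (\<lambda>(p, q). smult (eps q) p) (Delta x)) = x) \<and>
     \<comment> \<open>Delta and eps are unital algebra morphisms\<close>
     (\<forall>x y. tensor_eq smult (Delta (mul x y))
        (concat (map (\<lambda>(p, q). map (\<lambda>(r, s). (mul p r, mul q s)) (Delta y)) (Delta x)))) \<and>
     tensor_eq smult (Delta e) [(e, e)] \<and>
     (\<forall>x y. eps (mul x y) = eps x * eps y) \<and> eps e = 1 \<and>
     \<comment> \<open>V is the space of primitive elements\<close>
     V = {x. tensor_eq smult (Delta x) [(x, e), (e, x)]} \<and>
     \<comment> \<open>U is generated as a unital algebra by V\<close>
     (\<forall>S. e \<in> S \<and> V \<subseteq> S \<and> (\<forall>x\<in>S. \<forall>y\<in>S. x + y \<in> S \<and> mul x y \<in> S) \<and>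
          (\<forall>c. \<forall>x\<in>S. smult c x \<in> S) \<longrightarrow> S = UNIV) \<and>
     \<comment> \<open>the defining identity\<close>
     (\<forall>a y z. sum_list (map (\<lambda>(a1, a2). mul a1 (mul y (mul a2 z))) (Delta a)) =
               sum_list (map (\<lambda>(a1, a2). mul (mul a1 (mul y a2)) z) (Delta a))) \<and>
     \<comment> \<open>brackets of V in terms of the product of U\<close>
     (\<forall>a\<in>V. \<forall>b\<in>V. br a b = mul a b - mul b a) \<and>
     (\<forall>a\<in>V. \<forall>b\<in>V. \<forall>c\<in>V.
        br3 a b c = mul a (mul b c) - mul b (mul a c) - mul c (mul a b) + mul c (mul b a))"

definition is_derivation :: "('k::field \<Rightarrow> 'u::ab_group_add \<Rightarrow> 'u) \<Rightarrow> ('u \<Rightarrow> 'u \<Rightarrow> 'u) \<Rightarrow> ('u \<Rightarrow> 'u) \<Rightarrow> bool" where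
  "is_derivation smult mul D \<longleftrightarrow>
     (\<forall>x y. D (x + y) = D x + D y) \<and> (\<forall>c x. D (smult c x) = smult c (D x)) \<and>
     (\<forall>x y. D (mul x y) = mul (D x) y + mul x (D y))"

end

theory Submission
  imports Defs
begin

lemma additive_diff:
  fixes f :: "'a::ab_group_add \<Rightarrow> 'b::ab_group_add"
  assumes "\<forall>x y. f (x + y) = f x + f y"
  shows "f (x - y) = f x - f y"
proof -
  have "f x = f ((x - y) + y)" by simp
  also have "\<dots> = f (x - y) + f y" using assms by blast
  finally show ?thesis by (simp add: algebra_simps)
qed

theorem lemma2p1:
  fixes smult :: "'k::field_char_0 \<Rightarrow> 'u::ab_group_add \<Rightarrow> 'u"
    and V :: "'u set" and br :: "'u \<Rightarrow> 'u \<Rightarrow> 'u" and br3 :: "'u \<Rightarrow> 'u \<Rightarrow> 'u \<Rightarrow> 'u"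
    and mul :: "'u \<Rightarrow> 'u \<Rightarrow> 'u" and e :: 'u
    and Delta :: "'u \<Rightarrow> ('u \<times> 'u) list" and eps :: "'u \<Rightarrow> 'k"
    and a b :: 'u
  assumes "bol_enveloping smult V br br3 mul e Delta eps"
    and "a \<in> V" and "b \<in> V" and "br a b = 0"
  shows "is_derivation smult mul (\<lambda>x. mul a (mul b x) - mul b (mul a x))"
proof -
  note H = assms(1)[unfolded bol_enveloping_def]
  have bm: "bilinear_map smult mul smult" using H by blast
  have vs: "vector_space smult" using H by (simp add: bol_algebra_def)
  have unit: "\<And>x. mul e x = x" "\<And>x. mul x e = x" using H by auto
  have ladd: "\<And>x y z. mul (x + y) z = mul x z + mul y z"
   and radd: "\<And>x y z. mul x (y + z) = mul x y + mul x z"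
   and lsc: "\<And>c x y. mul (smult c x) y = smult c (mul x y)"
   and rsc: "\<And>c x y. mul x (smult c y) = smult c (mul x y)"
    using bm unfolding bilinear_map_def by blast+
  have ldiff: "\<And>x y z. mul (x - y) z = mul x z - mul y z"
    by (rule additive_diff[where f="\<lambda>x. mul x _"]) (simp add: ladd)
  have rdiff: "\<And>x y z. mul z (x - y) = mul z x - mul z y"
    by (rule additive_diff[where f="\<lambda>x. mul _ x"]) (simp add: radd)
  have PI: "\<forall>a y z. sum_list (map (\<lambda>(a1, a2). mul a1 (mul y (mul a2 z))) (Delta a)) =
               sum_list (map (\<lambda>(a1, a2). mul (mul a1 (mul y a2)) z) (Delta a))"
    using H by blast
  have prim: "\<And>c. c \<in> V \<Longrightarrow> tensor_eq smult (Delta c) [(c, e), (e, c)]"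
    using H by blast
  have P: "mul c (mul y z) + mul y (mul c z) = mul (mul c y) z + mul (mul y c) z"
    if "c \<in> V" for c y z
  proof -
    have b1: "bilinear_map smult (\<lambda>p q. mul p (mul y (mul q z))) smult"
      unfolding bilinear_map_def by (simp add: ladd radd lsc rsc)
    have b2: "bilinear_map smult (\<lambda>p q. mul (mul p (mul y q)) z) smult"
      unfolding bilinear_map_def by (simp add: ladd radd lsc rsc)
    have t: "tensor_eq smult (Delta c) [(c, e), (e, c)]" using prim that .
    have e1: "tensor_sum (\<lambda>p q. mul p (mul y (mul q z))) (Delta c)
        = tensor_sum (\<lambda>p q. mul p (mul y (mul q z))) [(c, e), (e, c)]"
      using t b1 unfolding tensor_eq_def by blast
    have e2: "tensor_sum (\<lambda>p q. mul (mul p (mul y q)) z) (Delta c)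
        = tensor_sum (\<lambda>p q. mul (mul p (mul y q)) z) [(c, e), (e, c)]"
      using t b2 unfolding tensor_eq_def by blast
    have "tensor_sum (\<lambda>p q. mul p (mul y (mul q z))) (Delta c)
        = tensor_sum (\<lambda>p q. mul (mul p (mul y q)) z) (Delta c)"
      using PI unfolding tensor_sum_def by blast
    then show ?thesis using e1 e2 unfolding tensor_sum_def by (simp add: unit)
  qed
  have ab: "mul a b = mul b a"
    using H assms(2,3,4) by auto
  have Pa: "\<And>y z. mul a (mul y z) = mul (mul a y) z + mul (mul y a) z - mul y (mul a z)"
    using P[OF assms(2)] by (metis add_diff_cancel_right')
  have Pb: "\<And>y z. mul b (mul y z) = mul (mul b y) z + mul (mul y b) z - mul y (mul b z)"
    using P[OF assms(3)] by (metis add_diff_cancel_right')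
  have w: "mul a (mul x b) + mul (mul b x) a + mul (mul x b) a
          = mul b (mul x a) + mul (mul a x) b + mul (mul x a) b" for x
    using P[OF assms(2), of x b] P[OF assms(3), of x a] ab
    by (metis add.commute add.left_commute add_left_cancel)
  show ?thesis
    unfolding is_derivation_def
  proof (intro conjI allI)
    fix x y
    show "mul a (mul b (x + y)) - mul b (mul a (x + y)) =
          (mul a (mul b x) - mul b (mul a x)) + (mul a (mul b y) - mul b (mul a y))"
      by (simp add: radd algebra_simps)
  next
    fix c x
    show "mul a (mul b (smult c x)) - mul b (mul a (smult c x)) =
          smult c (mul a (mul b x) - mul b (mul a x))"
    proof -
      have sd: "smult c (u - v) = smult c u - smult c v" for u v
        by (rule additive_diff[where f="smult c"]) (use vs in \<open>simp add: vector_space_def\<close>)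
      show ?thesis by (simp add: rsc sd)
    qed
  next
    fix x y
    have "mul a (mul b (mul x y)) = mul a (mul (mul b x) y) + mul a (mul (mul x b) y) - mul a (mul x (mul b y))"
      by (simp add: Pb radd rdiff)
    also have "\<dots> = (mul (mul a (mul b x)) y + mul (mul (mul b x) a) y - mul (mul b x) (mul a y))
        + (mul (mul a (mul x b)) y + mul (mul (mul x b) a) y - mul (mul x b) (mul a y))
        - (mul (mul a x) (mul b y) + mul (mul x a) (mul b y) - mul x (mul a (mul b y)))"
      by (simp only: Pa)
    finally have A: "mul a (mul b (mul x y)) = \<dots>" .
    have "mul b (mul a (mul x y)) = mul b (mul (mul a x) y) + mul b (mul (mul x a) y) - mul b (mul x (mul a y))"
      by (simp add: Pa radd rdiff)
    also have "\<dots> = (mul (mul b (mul a x)) y + mul (mul (mul a x) b) y - mul (mul a x) (mul b y))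
        + (mul (mul b (mul x a)) y + mul (mul (mul x a) b) y - mul (mul x a) (mul b y))
        - (mul (mul b x) (mul a y) + mul (mul x b) (mul a y) - mul x (mul b (mul a y)))"
      by (simp only: Pb)
    finally have B: "mul b (mul a (mul x y)) = \<dots>" .
    have W: "mul (mul a (mul x b)) y + mul (mul (mul b x) a) y + mul (mul (mul x b) a) y
          = mul (mul b (mul x a)) y + mul (mul (mul a x) b) y + mul (mul (mul x a) b) y"
      using arg_cong[OF w[of x], of "\<lambda>t. mul t y"] by (simp add: ladd)
    show "mul a (mul b (mul x y)) - mul b (mul a (mul x y)) =
          mul (mul a (mul b x) - mul b (mul a x)) y + mul x (mul a (mul b y) - mul b (mul a y))"
      unfolding A B ldiff rdiff using W by (simp add: algebra_simps)
  qed
qed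

end
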